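(* Let $K$ be either of the (two non-isomorphic) $2$-uniform tilings of the plane whose vertex types are $[3^3,4^2]$ and $[4^4]$. If $X$ is a map on the torus that is a quotient $X=K/\Gamma$ of $K$, then the vertices of $X$ form exactly $2$ orbits under ${\rm Aut}(X)$.
   Context: A map is a polyhedral map: a cellular embedding of a connected graph in a closed surface such that the intersection of any two distinct faces is empty, a single vertex, or a single edge. For a vertex $u$, the faces containing $u$ form a cyclic sequence (the face-cycle at $u$); if this cyclic sequence consists of consecutive blocks of $n_1$ $p_1$-gons, then $n_2$ $p_2$-gons, ..., then $n_k$ $p_k$-gons, with cyclically consecutive $p_i$ distinct, then $u$ is said to have type $[p_1^{n_1},\dots,p_k^{n_k}]$ (defined up to cyclic shift and reversal). A $2$-uniform tiling is an edge-to-edge tiling of the Euclidean plane $\mathbb{R}^2$ by regular polygons whose symmetry group has exactly two orbits on the set of vertices; viewed as a map on the plane, its vertices have (at most) two types, listed as $[W;Z]$. (Up to isomorphism there are exactly $20$ such tilings.) For a map $K$ on the plane, a quotient of $K$ on the torus is a map $X$ on the torus together with a polyhedral covering map $\eta:K\to X$ with $X=K/\Gamma$, where $\Gamma\le {\rm Aut}(K)$ is a subgroup acting without fixed vertices, edges or faces and $K/\Gamma$ is homeomorphic to the torus. ${\rm Aut}(X)$ denotes the automorphism group of the map $X$, acting on its vertex set $V(X)$. *)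

theory Defs
  imports Main
begin

text \<open>
  Vertices are the points (i, y) of int x int; row y is a horizontal line of
  vertices.  The horizontal strip between rows y and y+1 is a strip of
  triangles iff y mod (k+1) = k, otherwise it is a strip of unit squares.
  Crossing a triangle strip shifts the row by half an edge length, so in a
  triangle strip the vertex (i, y+1) lies above the midpoint of
  (i, y) and (i+1, y).  For k = 2 (two square strips per triangle strip) and
  k = 3 (three square strips per triangle strip) these are exactly the two
  non-isomorphic 2-uniform tilings with vertex types [3^3.4^2] and [4^4].
  Faces of a polyhedral map are recorded as their vertex sets, edges as
  2-element vertex sets (a polyhedral map is determined by this data).
\<close>

definition tri_layer :: "nat \<Rightarrow> int \<Rightarrow> bool" where
  "tri_layer k y \<longleftrightarrow> y mod (int k + 1) = int k"

definition KE :: "nat \<Rightarrow> (int \<times> int) set set" where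
  "KE k = {{(i, y), (i + 1, y)} | i y. True}
        \<union> {{(i, y), (i, y + 1)} | i y. True}
        \<union> {{(i + 1, y), (i, y + 1)} | i y. tri_layer k y}"

definition KF :: "nat \<Rightarrow> (int \<times> int) set set" where
  "KF k = {{(i, y), (i + 1, y), (i + 1, y + 1), (i, y + 1)} | i y. \<not> tri_layer k y}
        \<union> {{(i, y), (i + 1, y), (i, y + 1)} | i y. tri_layer k y}
        \<union> {{(i + 1, y), (i + 1, y + 1), (i, y + 1)} | i y. tri_layer k y}"

text \<open>Counter-clockwise oriented boundary darts (a, b, f): a \<rightarrow> b is a
  boundary edge of the face f traversed counter-clockwise.\<close>

definition KD :: "nat \<Rightarrow> ((int \<times> int) \<times> (int \<times> int) \<times> (int \<times> int) set) set" where
  "KD k =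
     {(a, b, f) | a b f i y. \<not> tri_layer k y \<and>
        f = {(i, y), (i + 1, y), (i + 1, y + 1), (i, y + 1)} \<and>
        (a, b) \<in> {((i, y), (i + 1, y)), ((i + 1, y), (i + 1, y + 1)),
                   ((i + 1, y + 1), (i, y + 1)), ((i, y + 1), (i, y))}}
   \<union> {(a, b, f) | a b f i y. tri_layer k y \<and>
        f = {(i, y), (i + 1, y), (i, y + 1)} \<and>
        (a, b) \<in> {((i, y), (i + 1, y)), ((i + 1, y), (i, y + 1)), ((i, y + 1), (i, y))}}
   \<union> {(a, b, f) | a b f i y. tri_layer k y \<and>
        f = {(i + 1, y), (i + 1, y + 1), (i, y + 1)} \<and>
        (a, b) \<in> {((i + 1, y), (i + 1, y + 1)), ((i + 1, y + 1), (i, y + 1)),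
                   ((i, y + 1), (i + 1, y))}}"

definition map_aut :: "'v set \<Rightarrow> 'v set set \<Rightarrow> 'v set set \<Rightarrow> ('v \<Rightarrow> 'v) \<Rightarrow> bool" where
  "map_aut V E F \<phi> \<longleftrightarrow> bij_betw \<phi> V V \<and> (\<lambda>e. \<phi> ` e) ` E = E \<and> (\<lambda>f. \<phi> ` f) ` F = F"

definition polyhedral_map :: "'v set \<Rightarrow> 'v set set \<Rightarrow> 'v set set \<Rightarrow> bool" where
  "polyhedral_map V E F \<longleftrightarrow>
     (\<forall>e\<in>E. e \<subseteq> V \<and> card e = 2) \<and>
     (\<forall>f\<in>F. f \<subseteq> V \<and> finite f \<and> card f \<ge> 3) \<and>
     (\<forall>f\<in>F. \<forall>g\<in>F. f \<noteq> g \<longrightarrow> f \<inter> g = {} \<or> card (f \<inter> g) = 1 \<or> f \<inter> g \<in> E)"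

definition orientation_preserving :: "nat \<Rightarrow> (int \<times> int \<Rightarrow> int \<times> int) \<Rightarrow> bool" where
  "orientation_preserving k \<gamma> \<longleftrightarrow>
     (\<forall>(a, b, f)\<in>KD k. (\<gamma> a, \<gamma> b, \<gamma> ` f) \<in> KD k)"

text \<open>Gamma is a subgroup of Aut(K) acting without fixed vertices, edges and
  faces such that K/Gamma is a torus (equivalently, for a free action on the
  plane: finitely many vertex orbits and Gamma orientation preserving).\<close>

definition torus_group :: "nat \<Rightarrow> (int \<times> int \<Rightarrow> int \<times> int) set \<Rightarrow> bool" where
  "torus_group k \<Gamma> \<longleftrightarrow>
     (\<forall>\<gamma>\<in>\<Gamma>. map_aut UNIV (KE k) (KF k) \<gamma>) \<and>
     id \<in> \<Gamma> \<and> (\<forall>\<alpha>\<in>\<Gamma>. \<forall>\<beta>\<in>\<Gamma>. \<alpha> \<circ> \<beta> \<in> \<Gamma>) \<and> (\<forall>\<alpha>\<in>\<Gamma>. inv \<alpha> \<in> \<Gamma>) \<and>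
     (\<forall>\<gamma>\<in>\<Gamma>. \<gamma> \<noteq> id \<longrightarrow>
        (\<forall>v. \<gamma> v \<noteq> v) \<and> (\<forall>e\<in>KE k. \<gamma> ` e \<noteq> e) \<and> (\<forall>f\<in>KF k. \<gamma> ` f \<noteq> f)) \<and>
     (\<forall>\<gamma>\<in>\<Gamma>. orientation_preserving k \<gamma>) \<and>
     finite (UNIV // {(a, b). \<exists>\<gamma>\<in>\<Gamma>. \<gamma> a = b})"

definition quotient_map :: "nat \<Rightarrow> (int \<times> int \<Rightarrow> int \<times> int) set \<Rightarrow> (int \<times> int \<Rightarrow> 'v)
     \<Rightarrow> 'v set \<Rightarrow> 'v set set \<Rightarrow> 'v set set \<Rightarrow> bool" where
  "quotient_map k \<Gamma> \<eta> VX EdX FcX \<longleftrightarrow>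
     range \<eta> = VX \<and>
     (\<forall>a b. \<eta> a = \<eta> b \<longleftrightarrow> (\<exists>\<gamma>\<in>\<Gamma>. \<gamma> a = b)) \<and>
     EdX = (\<lambda>e. \<eta> ` e) ` KE k \<and>
     FcX = (\<lambda>f. \<eta> ` f) ` KF k \<and>
     (\<forall>f\<in>KF k. inj_on \<eta> f) \<and>
     polyhedral_map VX EdX FcX"

definition aut_orbit_rel :: "'v set \<Rightarrow> 'v set set \<Rightarrow> 'v set set \<Rightarrow> ('v \<times> 'v) set" where
  "aut_orbit_rel V E F = {(x, y). x \<in> V \<and> y \<in> V \<and> (\<exists>\<phi>. map_aut V E F \<phi> \<and> \<phi> x = y)}"

end

theory Submission
  imports Defs
begin

definition sq :: "int \<Rightarrow> int \<Rightarrow> (int \<times> int) set" where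
  "sq i y = {(i, y), (i + 1, y), (i + 1, y + 1), (i, y + 1)}"
definition up :: "int \<Rightarrow> int \<Rightarrow> (int \<times> int) set" where
  "up i y = {(i, y), (i + 1, y), (i, y + 1)}"
definition dn :: "int \<Rightarrow> int \<Rightarrow> (int \<times> int) set" where
  "dn i y = {(i + 1, y), (i + 1, y + 1), (i, y + 1)}"

lemma disjF: "(P \<or> False) = P" by simp
lemma mem3: "((x, y, z) \<in> {(a, b, f) | a b f (i::int) (y'::int). P a b f i y'}) \<longleftrightarrow> (\<exists>i y'. P x y z i y')"
  by blast

lemma KD_iff: "(a, b, f) \<in> KD k \<longleftrightarrow>
  (\<exists>i y. \<not> tri_layer k y \<and> f = sq i y \<and>
     ((a, b) = ((i, y), (i + 1, y)) \<or> (a, b) = ((i + 1, y), (i + 1, y + 1)) \<or>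
      (a, b) = ((i + 1, y + 1), (i, y + 1)) \<or> (a, b) = ((i, y + 1), (i, y)))) \<or>
  (\<exists>i y. tri_layer k y \<and> f = up i y \<and>
     ((a, b) = ((i, y), (i + 1, y)) \<or> (a, b) = ((i + 1, y), (i, y + 1)) \<or> (a, b) = ((i, y + 1), (i, y)))) \<or>
  (\<exists>i y. tri_layer k y \<and> f = dn i y \<and>
     ((a, b) = ((i + 1, y), (i + 1, y + 1)) \<or> (a, b) = ((i + 1, y + 1), (i, y + 1)) \<or> (a, b) = ((i, y + 1), (i + 1, y))))"
  unfolding KD_def Un_iff mem3 insert_iff empty_iff disjF
  unfolding sq_def[symmetric] unfolding up_def[symmetric] dn_def[symmetric] by (simp only: disj_assoc)

lemma mem1: "(x \<in> {F i y | (i::int) (y::int). P i y}) \<longleftrightarrow> (\<exists>i y. P i y \<and> x = F i y)"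
  by blast

lemma KF_iff: "f \<in> KF k \<longleftrightarrow> (\<exists>i y. \<not> tri_layer k y \<and> f = sq i y) \<or>
   (\<exists>i y. tri_layer k y \<and> f = up i y) \<or> (\<exists>i y. tri_layer k y \<and> f = dn i y)"
  unfolding KF_def Un_iff mem1
  unfolding sq_def[symmetric] unfolding up_def[symmetric] dn_def[symmetric] by (simp only: disj_assoc)

lemma card_sq[simp]: "card (sq i y) = 4" by (simp add: sq_def)
lemma card_up[simp]: "card (up i y) = 3" by (simp add: up_def)
lemma card_dn[simp]: "card (dn i y) = 3" by (simp add: dn_def)

lemma sq_inj0: "(i::int, y::int) \<in> {(j, z), (j + 1, z), (j + 1, z + 1), (j, z + 1)} \<Longrightarrow>
     (j, z) \<in> {(i, y), (i + 1, y), (i + 1, y + 1), (i, y + 1)} \<Longrightarrow> i = j \<and> y = z"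
  by (simp only: insert_iff empty_iff prod.inject; arith)

lemma sq_inj: "sq i y = sq j z \<Longrightarrow> i = j \<and> y = z"
proof -
  assume h: "sq i y = sq j z"
  have "(i, y) \<in> sq j z" unfolding h[symmetric] by (simp add: sq_def)
  moreover have "(j, z) \<in> sq i y" unfolding h by (simp add: sq_def)
  ultimately show ?thesis unfolding sq_def by (rule sq_inj0)
qed

lemma up_inj0: "(i::int, y::int) \<in> {(j, z), (j + 1, z), (j, z + 1)} \<Longrightarrow>
     (i + 1, y) \<in> {(j, z), (j + 1, z), (j, z + 1)} \<Longrightarrow>
     (j, z) \<in> {(i, y), (i + 1, y), (i, y + 1)} \<Longrightarrow> i = j \<and> y = z"
  by (simp only: insert_iff empty_iff prod.inject; arith)

lemma up_inj: "up i y = up j z \<Longrightarrow> i = j \<and> y = z"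
proof -
  assume h: "up i y = up j z"
  have "(i, y) \<in> up j z" "(i+1, y) \<in> up j z" unfolding h[symmetric] by (simp_all add: up_def)
  moreover have "(j, z) \<in> up i y" unfolding h by (simp add: up_def)
  ultimately show ?thesis unfolding up_def by (rule up_inj0)
qed

lemma dn_inj0: "(i::int, y + 1) \<in> {(j + 1, z), (j + 1, z + 1), (j, z + 1)} \<Longrightarrow>
    (i + 1, y::int) \<in> {(j + 1, z), (j + 1, z + 1), (j, z + 1)} \<Longrightarrow>
    (j, z + 1) \<in> {(i + 1, y), (i + 1, y + 1), (i, y + 1)} \<Longrightarrow> i = j \<and> y = z"
  by (simp only: insert_iff empty_iff prod.inject; arith)

lemma dn_inj: "dn i y = dn j z \<Longrightarrow> i = j \<and> y = z"
proof -
  assume h: "dn i y = dn j z"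
  have "(i, y+1) \<in> dn j z" "(i+1, y) \<in> dn j z" unfolding h[symmetric] by (simp_all add: dn_def)
  moreover have "(j, z+1) \<in> dn i y" unfolding h by (simp add: dn_def)
  ultimately show ?thesis unfolding dn_def by (rule dn_inj0)
qed

lemma up_dn0: "(i::int, y::int) \<in> {(j + 1, z), (j + 1, z + 1), (j, z + 1)} \<Longrightarrow>
     (i + 1, y) \<in> {(j + 1, z), (j + 1, z + 1), (j, z + 1)} \<Longrightarrow>
     (i, y + 1) \<in> {(j + 1, z), (j + 1, z + 1), (j, z + 1)} \<Longrightarrow> False"
  by (simp only: insert_iff empty_iff prod.inject; arith)

lemma up_dn: "up i y \<noteq> dn j z"
proof
  assume h: "up i y = dn j z"
  have "(i, y) \<in> dn j z" "(i+1, y) \<in> dn j z" "(i, y+1) \<in> dn j z" unfolding h[symmetric] by (simp_all add: up_def)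
  then show False unfolding dn_def by (rule up_dn0)
qed

lemma sq_up: "sq i y \<noteq> up j z"
proof
  assume "sq i y = up j z"
  then have "card (sq i y) = card (up j z)" by simp
  then show False by simp
qed
lemma sq_dn: "sq i y \<noteq> dn j z"
proof
  assume "sq i y = dn j z"
  then have "card (sq i y) = card (dn j z)" by simp
  then show False by simp
qed

lemma U2: "(a, b, f) \<in> KD k \<Longrightarrow> (a, b, g) \<in> KD k \<Longrightarrow> f = g"
  unfolding KD_iff by (elim disjE exE conjE; simp)

lemma U1: "(a, b, f) \<in> KD k \<Longrightarrow> (a, c, f) \<in> KD k \<Longrightarrow> b = c"
  unfolding KD_iff
  by (elim disjE exE conjE; simp; (drule sq_inj up_inj dn_inj)?; simp add: up_dn sq_up sq_dn up_dn[symmetric] sq_up[symmetric] sq_dn[symmetric])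

lemma sqD1: "\<not> tri_layer k y \<Longrightarrow> ((i, y), (i + 1, y), sq i y) \<in> KD k" unfolding KD_iff by blast
lemma sqD2: "\<not> tri_layer k y \<Longrightarrow> ((i + 1, y), (i + 1, y + 1), sq i y) \<in> KD k" unfolding KD_iff by blast
lemma sqD3: "\<not> tri_layer k y \<Longrightarrow> ((i + 1, y + 1), (i, y + 1), sq i y) \<in> KD k" unfolding KD_iff by blast
lemma sqD4: "\<not> tri_layer k y \<Longrightarrow> ((i, y + 1), (i, y), sq i y) \<in> KD k" unfolding KD_iff by blast
lemma upD1: "tri_layer k y \<Longrightarrow> ((i, y), (i + 1, y), up i y) \<in> KD k" unfolding KD_iff by blast
lemma upD2: "tri_layer k y \<Longrightarrow> ((i + 1, y), (i, y + 1), up i y) \<in> KD k" unfolding KD_iff by blast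
lemma upD3: "tri_layer k y \<Longrightarrow> ((i, y + 1), (i, y), up i y) \<in> KD k" unfolding KD_iff by blast
lemma dnD1: "tri_layer k y \<Longrightarrow> ((i + 1, y), (i + 1, y + 1), dn i y) \<in> KD k" unfolding KD_iff by blast
lemma dnD2: "tri_layer k y \<Longrightarrow> ((i + 1, y + 1), (i, y + 1), dn i y) \<in> KD k" unfolding KD_iff by blast
lemma dnD3: "tri_layer k y \<Longrightarrow> ((i, y + 1), (i + 1, y), dn i y) \<in> KD k" unfolding KD_iff by blast

lemma L1:
  assumes op: "orientation_preserving k \<delta>" and d1: "(a, b, f) \<in> KD k" and d2: "(b, c, f) \<in> KD k"
    and fa: "\<delta> a = a" and fb: "\<delta> b = b"
  shows "\<delta> c = c"
proof -
  have "(\<delta> a, \<delta> b, \<delta> ` f) \<in> KD k" using op d1 unfolding orientation_preserving_def by blast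
  then have "(a, b, \<delta> ` f) \<in> KD k" using fa fb by simp
  then have ff: "\<delta> ` f = f" using U2 d1 by blast
  have "(\<delta> b, \<delta> c, \<delta> ` f) \<in> KD k" using op d2 unfolding orientation_preserving_def by blast
  then have "(b, \<delta> c, f) \<in> KD k" using fb ff by simp
  then show ?thesis using U1 d2 by metis
qed

lemma prop_right:
  assumes op: "orientation_preserving k \<delta>" and f0: "\<delta> (i, y) = (i, y)" and f1: "\<delta> (i + 1, y) = (i + 1, y)"
  shows "\<delta> (i, y + 1) = (i, y + 1) \<and> \<delta> (i + 1, y + 1) = (i + 1, y + 1) \<and> \<delta> (i + 1 + 1, y) = (i + 1 + 1, y)"
proof (cases "tri_layer k y")
  case True
  have a: "\<delta> (i, y + 1) = (i, y + 1)" by (rule L1[OF op upD1[OF True] upD2[OF True] f0 f1])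
  have b: "\<delta> (i + 1, y + 1) = (i + 1, y + 1)" by (rule L1[OF op dnD3[OF True] dnD1[OF True] a f1])
  have c: "\<delta> (i + 1 + 1, y) = (i + 1 + 1, y)" by (rule L1[OF op upD3[OF True, of "i+1"] upD1[OF True, of "i+1"] b f1])
  show ?thesis using a b c by simp
next
  case False
  have b: "\<delta> (i + 1, y + 1) = (i + 1, y + 1)" by (rule L1[OF op sqD1[OF False] sqD2[OF False] f0 f1])
  have a: "\<delta> (i, y + 1) = (i, y + 1)" by (rule L1[OF op sqD2[OF False] sqD3[OF False] f1 b])
  have c: "\<delta> (i + 1 + 1, y) = (i + 1 + 1, y)" by (rule L1[OF op sqD4[OF False, of "i+1"] sqD1[OF False, of "i+1"] b f1])
  show ?thesis using a b c by simp
qed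

lemma prop_left:
  assumes op: "orientation_preserving k \<delta>" and f0: "\<delta> (i, z + 1) = (i, z + 1)" and f1: "\<delta> (i + 1, z + 1) = (i + 1, z + 1)"
  shows "\<delta> (i, z) = (i, z) \<and> \<delta> (i + 1, z) = (i + 1, z) \<and> \<delta> (i - 1, z + 1) = (i - 1, z + 1)"
proof (cases "tri_layer k z")
  case True
  have b: "\<delta> (i + 1, z) = (i + 1, z)" by (rule L1[OF op dnD2[OF True] dnD3[OF True] f1 f0])
  have a: "\<delta> (i, z) = (i, z)" by (rule L1[OF op upD2[OF True] upD3[OF True] b f0])
  have "((i, z), (i, z + 1), dn (i - 1) z) \<in> KD k" using dnD1[OF True, of "i - 1"] by simp
  moreover have "((i, z + 1), (i - 1, z + 1), dn (i - 1) z) \<in> KD k" using dnD2[OF True, of "i - 1"] by simp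
  ultimately have c: "\<delta> (i - 1, z + 1) = (i - 1, z + 1)" using L1[OF op _ _ a f0] by blast
  show ?thesis using a b c by simp
next
  case False
  have a: "\<delta> (i, z) = (i, z)" by (rule L1[OF op sqD3[OF False] sqD4[OF False] f1 f0])
  have b: "\<delta> (i + 1, z) = (i + 1, z)" by (rule L1[OF op sqD4[OF False] sqD1[OF False] f0 a])
  have "((i, z), (i, z + 1), sq (i - 1) z) \<in> KD k" using sqD2[OF False, of "i - 1"] by simp
  moreover have "((i, z + 1), (i - 1, z + 1), sq (i - 1) z) \<in> KD k" using sqD3[OF False, of "i - 1"] by simp
  ultimately have c: "\<delta> (i - 1, z + 1) = (i - 1, z + 1)" using L1[OF op _ _ a f0] by blast
  show ?thesis using a b c by simp
qed

lemma row_fixed: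
  assumes op: "orientation_preserving k \<delta>" and f0: "\<delta> (i, y) = (i, y)" and f1: "\<delta> (i + 1, y) = (i + 1, y)"
  shows "\<delta> (j, y) = (j, y)"
proof -
  have up: "\<delta> (i + int n, y) = (i + int n, y) \<and> \<delta> (i + int n + 1, y) = (i + int n + 1, y)" for n
  proof (induction n)
    case 0 then show ?case using f0 f1 by simp
  next
    case (Suc n)
    then have "\<delta> (i + int n + 1 + 1, y) = (i + int n + 1 + 1, y)" using prop_right[OF op, of "i + int n" y] by blast
    then show ?case using Suc by (simp add: algebra_simps)
  qed
  have dn: "\<delta> (i - int n, y) = (i - int n, y) \<and> \<delta> (i - int n + 1, y) = (i - int n + 1, y)" for n
  proof (induction n)
    case 0 then show ?case using f0 f1 by simp
  next
    case (Suc n)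
    then have "\<delta> (i - int n - 1, y - 1 + 1) = (i - int n - 1, y - 1 + 1)" using prop_left[OF op, of "i - int n" "y - 1"] by simp
    then show ?case using Suc by (simp add: algebra_simps)
  qed
  show ?thesis
  proof (cases "j \<ge> i")
    case True
    then show ?thesis using up[of "nat (j - i)"] by simp
  next
    case False
    then show ?thesis using dn[of "nat (i - j)"] by simp
  qed
qed

lemma rigid:
  assumes op: "orientation_preserving k \<delta>" and f0: "\<delta> (i, y) = (i, y)" and f1: "\<delta> (i + 1, y) = (i + 1, y)"
  shows "\<delta> = id"
proof -
  have up: "\<forall>j. \<delta> (j, y + int n) = (j, y + int n)" for n
  proof (induction n)
    case 0 then show ?case using row_fixed[OF op f0 f1] by simp
  next
    case (Suc n)
    then have A: "\<delta> (0, y + int n + 1) = (0, y + int n + 1)" and B: "\<delta> (0 + 1, y + int n + 1) = (0 + 1, y + int n + 1)"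
      using prop_right[OF op, of 0 "y + int n"] by auto
    have "\<forall>j. \<delta> (j, y + int n + 1) = (j, y + int n + 1)" using row_fixed[OF op A B] by blast
    then show ?case by (simp add: algebra_simps)
  qed
  have dn: "\<forall>j. \<delta> (j, y - int n) = (j, y - int n)" for n
  proof (induction n)
    case 0 then show ?case using row_fixed[OF op f0 f1] by simp
  next
    case (Suc n)
    then have A: "\<delta> (0, y - int n - 1) = (0, y - int n - 1)" and B: "\<delta> (0 + 1, y - int n - 1) = (0 + 1, y - int n - 1)"
      using prop_left[OF op, of 0 "y - int n - 1"] by auto
    have "\<forall>j. \<delta> (j, y - int n - 1) = (j, y - int n - 1)" using row_fixed[OF op A B] by blast
    then show ?case by (simp add: algebra_simps)
  qed
  show ?thesis
  proof
    fix p :: "int \<times> int"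
    obtain j z where p: "p = (j, z)" by (cases p)
    show "\<delta> p = id p"
    proof (cases "z \<ge> y")
      case True then show ?thesis using up[of "nat (z - y)"] p by simp
    next
      case False then show ?thesis using dn[of "nat (y - z)"] p by simp
    qed
  qed
qed

lemma tri_dvd: "tri_layer k y \<longleftrightarrow> (int k + 1) dvd (y + 1)"
proof -
  let ?m = "int k + 1"
  have km: "int k mod ?m = int k" by simp
  have "tri_layer k y \<longleftrightarrow> y mod ?m = int k mod ?m" unfolding tri_layer_def km ..
  also have "\<dots> \<longleftrightarrow> ?m dvd (y - int k)" by (rule mod_eq_dvd_iff)
  also have "\<dots> \<longleftrightarrow> ?m dvd (y - int k + ?m)" by (simp only: dvd_add_triv_right_iff)
  finally show ?thesis by simp
qed

definition tr :: "int \<Rightarrow> int \<Rightarrow> int \<times> int \<Rightarrow> int \<times> int" where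
  "tr a b p = (fst p + a, snd p + b)"
definition rot :: "int \<Rightarrow> int \<Rightarrow> int \<times> int \<Rightarrow> int \<times> int" where
  "rot a b p = (a - fst p, b - snd p)"

lemma tr_apply[simp]: "tr a b (i, y) = (i + a, y + b)" by (simp add: tr_def)
lemma rot_apply[simp]: "rot a b (i, y) = (a - i, b - y)" by (simp add: rot_def)

lemma tri_tr: "(int k + 1) dvd b \<Longrightarrow> tri_layer k (y + b) \<longleftrightarrow> tri_layer k y"
  unfolding tri_dvd by (metis add.commute add.left_commute dvd_add_right_iff)

lemma tri_rot: "(int k + 1) dvd (b + 1) \<Longrightarrow> tri_layer k (b - y - 1) \<longleftrightarrow> tri_layer k y"
proof -
  assume h: "(int k + 1) dvd (b + 1)"
  have "b - y - 1 + 1 = (b + 1) - (y + 1)" by simp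
  moreover have "y + 1 = (b + 1) - ((b + 1) - (y + 1))" by simp
  ultimately show ?thesis unfolding tri_dvd using h dvd_diff by metis
qed

lemma tr_sq: "tr a b ` sq i y = sq (i + a) (y + b)" by (auto simp: sq_def algebra_simps)
lemma tr_up: "tr a b ` up i y = up (i + a) (y + b)" by (auto simp: up_def algebra_simps)
lemma tr_dn: "tr a b ` dn i y = dn (i + a) (y + b)" by (auto simp: dn_def algebra_simps)
lemma rot_sq: "rot a b ` sq i y = sq (a - i - 1) (b - y - 1)" by (auto simp: sq_def algebra_simps)
lemma rot_up: "rot a b ` up i y = dn (a - i - 1) (b - y - 1)" by (auto simp: up_def dn_def algebra_simps)
lemma rot_dn: "rot a b ` dn i y = up (a - i - 1) (b - y - 1)" by (auto simp: up_def dn_def algebra_simps)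

definition KDP :: "nat \<Rightarrow> int \<Rightarrow> int \<Rightarrow> int \<times> int \<Rightarrow> int \<times> int \<Rightarrow> (int \<times> int) set \<Rightarrow> bool" where
  "KDP k i y a b f \<longleftrightarrow>
  (\<not> tri_layer k y \<and> f = sq i y \<and>
     ((a, b) = ((i, y), (i + 1, y)) \<or> (a, b) = ((i + 1, y), (i + 1, y + 1)) \<or>
      (a, b) = ((i + 1, y + 1), (i, y + 1)) \<or> (a, b) = ((i, y + 1), (i, y)))) \<or>
  (tri_layer k y \<and> f = up i y \<and>
     ((a, b) = ((i, y), (i + 1, y)) \<or> (a, b) = ((i + 1, y), (i, y + 1)) \<or> (a, b) = ((i, y + 1), (i, y)))) \<or>
  (tri_layer k y \<and> f = dn i y \<and>
     ((a, b) = ((i + 1, y), (i + 1, y + 1)) \<or> (a, b) = ((i + 1, y + 1), (i, y + 1)) \<or> (a, b) = ((i, y + 1), (i + 1, y))))"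

lemma KD_KDP: "(a, b, f) \<in> KD k \<longleftrightarrow> (\<exists>i y. KDP k i y a b f)"
  unfolding KD_iff KDP_def by blast

lemma tr_op:
  assumes h: "(int k + 1) dvd b"
  shows "orientation_preserving k (tr a b)"
  unfolding orientation_preserving_def
proof (clarify)
  fix x y f assume "(x, y, f) \<in> KD k"
  then obtain i z where P: "KDP k i z x y f" unfolding KD_KDP by blast
  have t: "tri_layer k (z + b) = tri_layer k z" using tri_tr[OF h] .
  have "KDP k (i + a) (z + b) (tr a b x) (tr a b y) (tr a b ` f)"
    using P unfolding KDP_def t
    by (elim disjE conjE; simp only: tr_sq tr_up tr_dn prod.inject tr_apply; simp add: algebra_simps)
  then show "(tr a b x, tr a b y, tr a b ` f) \<in> KD k" unfolding KD_KDP by blast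
qed

lemma rot_op:
  assumes h: "(int k + 1) dvd (b + 1)"
  shows "orientation_preserving k (rot a b)"
  unfolding orientation_preserving_def
proof (clarify)
  fix x y f assume "(x, y, f) \<in> KD k"
  then obtain i z where P: "KDP k i z x y f" unfolding KD_KDP by blast
  have t: "tri_layer k (b - z - 1) = tri_layer k z" using tri_rot[OF h] .
  have "KDP k (a - i - 1) (b - z - 1) (rot a b x) (rot a b y) (rot a b ` f)"
    using P unfolding KDP_def t
    by (elim disjE conjE; simp only: rot_sq rot_up rot_dn prod.inject rot_apply; simp add: algebra_simps)
  then show "(rot a b x, rot a b y, rot a b ` f) \<in> KD k" unfolding KD_KDP by blast
qed

lemma mem1': "(x \<in> {F i y | (i::int) (y::int). True}) \<longleftrightarrow> (\<exists>i y. x = F i y)"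
  by blast

lemma KE_iff: "e \<in> KE k \<longleftrightarrow> (\<exists>i y. e = {(i, y), (i + 1, y)}) \<or> (\<exists>i y. e = {(i, y), (i, y + 1)}) \<or>
    (\<exists>i y. tri_layer k y \<and> e = {(i + 1, y), (i, y + 1)})"
  unfolding KE_def Un_iff mem1 mem1' by blast

lemma tr_KE: assumes h: "(int k + 1) dvd b" and e: "e \<in> KE k" shows "tr a b ` e \<in> KE k"
proof -
  from e consider (h) i y where "e = {(i, y), (i + 1, y)}" | (v) i y where "e = {(i, y), (i, y + 1)}"
    | (s) i y where "tri_layer k y" "e = {(i + 1, y), (i, y + 1)}" unfolding KE_iff by blast
  then show ?thesis
  proof cases
    case h
    then have "tr a b ` e = {(i + a, y + b), (i + a + 1, y + b)}" by (simp add: algebra_simps)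
    then show ?thesis unfolding KE_iff by blast
  next
    case v
    then have "tr a b ` e = {(i + a, y + b), (i + a, y + b + 1)}" by (simp add: algebra_simps)
    then show ?thesis unfolding KE_iff by blast
  next
    case s
    then have "tr a b ` e = {(i + a + 1, y + b), (i + a, y + b + 1)}" by (simp add: algebra_simps)
    moreover have "tri_layer k (y + b)" using s tri_tr[OF h] by simp
    ultimately show ?thesis unfolding KE_iff by blast
  qed
qed

lemma rot_KE: assumes h: "(int k + 1) dvd (b + 1)" and e: "e \<in> KE k" shows "rot a b ` e \<in> KE k"
proof -
  from e consider (h) i y where "e = {(i, y), (i + 1, y)}" | (v) i y where "e = {(i, y), (i, y + 1)}"
    | (s) i y where "tri_layer k y" "e = {(i + 1, y), (i, y + 1)}" unfolding KE_iff by blast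
  then show ?thesis
  proof cases
    case h
    then have "rot a b ` e = {(a - i - 1, b - y), (a - i - 1 + 1, b - y)}" by auto
    then show ?thesis unfolding KE_iff by blast
  next
    case v
    then have "rot a b ` e = {(a - i, b - y - 1), (a - i, b - y - 1 + 1)}" by auto
    then show ?thesis unfolding KE_iff by blast
  next
    case s
    then have "rot a b ` e = {(a - i - 1 + 1, b - y - 1), (a - i - 1, b - y - 1 + 1)}" by auto
    moreover have "tri_layer k (b - y - 1)" using s tri_rot[OF h] by simp
    ultimately show ?thesis unfolding KE_iff by blast
  qed
qed

lemma tr_KF: assumes h: "(int k + 1) dvd b" and f: "f \<in> KF k" shows "tr a b ` f \<in> KF k"
proof -
  from f consider (s) i y where "\<not> tri_layer k y" "f = sq i y" | (u) i y where "tri_layer k y" "f = up i y"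
    | (d) i y where "tri_layer k y" "f = dn i y" unfolding KF_iff by blast
  then show ?thesis
  proof cases
    case s then have "\<not> tri_layer k (y + b)" "tr a b ` f = sq (i + a) (y + b)" using tri_tr[OF h] tr_sq by auto
    then show ?thesis unfolding KF_iff by blast
  next
    case u then have "tri_layer k (y + b)" "tr a b ` f = up (i + a) (y + b)" using tri_tr[OF h] tr_up by auto
    then show ?thesis unfolding KF_iff by blast
  next
    case d then have "tri_layer k (y + b)" "tr a b ` f = dn (i + a) (y + b)" using tri_tr[OF h] tr_dn by auto
    then show ?thesis unfolding KF_iff by blast
  qed
qed

lemma rot_KF: assumes h: "(int k + 1) dvd (b + 1)" and f: "f \<in> KF k" shows "rot a b ` f \<in> KF k"
proof -
  from f consider (s) i y where "\<not> tri_layer k y" "f = sq i y" | (u) i y where "tri_layer k y" "f = up i y"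
    | (d) i y where "tri_layer k y" "f = dn i y" unfolding KF_iff by blast
  then show ?thesis
  proof cases
    case s then have "\<not> tri_layer k (b - y - 1)" "rot a b ` f = sq (a - i - 1) (b - y - 1)" using tri_rot[OF h] rot_sq by auto
    then show ?thesis unfolding KF_iff by blast
  next
    case u then have "tri_layer k (b - y - 1)" "rot a b ` f = dn (a - i - 1) (b - y - 1)" using tri_rot[OF h] rot_up by auto
    then show ?thesis unfolding KF_iff by blast
  next
    case d then have "tri_layer k (b - y - 1)" "rot a b ` f = up (a - i - 1) (b - y - 1)" using tri_rot[OF h] rot_dn by auto
    then show ?thesis unfolding KF_iff by blast
  qed
qed

definition good :: "nat \<Rightarrow> (int \<times> int \<Rightarrow> int \<times> int) \<Rightarrow> bool" where
  "good k \<sigma> \<longleftrightarrow> (\<exists>a b. (int k + 1) dvd b \<and> \<sigma> = tr a b) \<or> (\<exists>a b. (int k + 1) dvd (b + 1) \<and> \<sigma> = rot a b)"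

lemma good_KE: "good k \<sigma> \<Longrightarrow> e \<in> KE k \<Longrightarrow> \<sigma> ` e \<in> KE k"
  unfolding good_def using tr_KE rot_KE by blast
lemma good_KF: "good k \<sigma> \<Longrightarrow> f \<in> KF k \<Longrightarrow> \<sigma> ` f \<in> KF k"
  unfolding good_def using tr_KF rot_KF by blast

lemma good_inv: "good k \<sigma> \<Longrightarrow> \<exists>\<sigma>'. good k \<sigma>' \<and> (\<forall>p. \<sigma> (\<sigma>' p) = p) \<and> (\<forall>p. \<sigma>' (\<sigma> p) = p)"
proof -
  assume "good k \<sigma>"
  then consider (t) a b where "(int k + 1) dvd b" "\<sigma> = tr a b" | (r) a b where "(int k + 1) dvd (b + 1)" "\<sigma> = rot a b"
    unfolding good_def by blast
  then show ?thesis
  proof cases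
    case t
    then have "good k (tr (-a) (-b))" unfolding good_def by (intro disjI1 exI[of _ "-a"] exI[of _ "-b"]) simp
    then show ?thesis using t by (intro exI[of _ "tr (-a) (-b)"]) (auto simp: tr_def)
  next
    case r
    then have "good k (rot a b)" unfolding good_def by blast
    then show ?thesis using r by (intro exI[of _ "rot a b"]) (auto simp: rot_def)
  qed
qed

lemma good_img_eq:
  assumes g: "good k \<sigma>" and into: "\<And>s x. good k s \<Longrightarrow> x \<in> S \<Longrightarrow> s ` x \<in> S"
  shows "(\<lambda>x. \<sigma> ` x) ` S = S"
proof
  show "(\<lambda>x. \<sigma> ` x) ` S \<subseteq> S" using into g by blast
  obtain \<sigma>' where s': "good k \<sigma>'" "\<forall>p. \<sigma> (\<sigma>' p) = p" using good_inv[OF g] by blast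
  show "S \<subseteq> (\<lambda>x. \<sigma> ` x) ` S"
  proof
    fix x assume x: "x \<in> S"
    have "\<And>p. \<sigma> (\<sigma>' p) = p" using s'(2) by blast
    then have "\<sigma> ` (\<sigma>' ` x) = x" by (simp add: image_image)
    moreover have "\<sigma>' ` x \<in> S" using into s'(1) x by blast
    ultimately show "x \<in> (\<lambda>x. \<sigma> ` x) ` S" by (metis image_eqI)
  qed
qed

lemma good_KE_eq: "good k \<sigma> \<Longrightarrow> (\<lambda>x. \<sigma> ` x) ` KE k = KE k"
  by (erule good_img_eq) (rule good_KE)
lemma good_KF_eq: "good k \<sigma> \<Longrightarrow> (\<lambda>x. \<sigma> ` x) ` KF k = KF k"
  by (erule good_img_eq) (rule good_KF)

lemma good_op: "good k \<sigma> \<Longrightarrow> orientation_preserving k \<sigma>"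
  unfolding good_def using tr_op rot_op by blast

lemma classC: "(a, b, f) \<in> KD k \<Longrightarrow> card f = 3 \<Longrightarrow> (b, a, g) \<in> KD k \<Longrightarrow> card g = 4 \<Longrightarrow>
  (\<exists>c y. tri_layer k y \<and> a = (c, y) \<and> b = (c + 1, y)) \<or> (\<exists>c y. tri_layer k y \<and> a = (c + 1, y + 1) \<and> b = (c, y + 1))"
  unfolding KD_iff by (elim disjE exE conjE; simp)

lemma op_comp: "orientation_preserving k \<sigma> \<Longrightarrow> orientation_preserving k \<tau> \<Longrightarrow> orientation_preserving k (\<sigma> \<circ> \<tau>)"
  unfolding orientation_preserving_def
proof (clarify)
  fix x y f assume s: "\<forall>(a, b, f)\<in>KD k. (\<sigma> a, \<sigma> b, \<sigma> ` f) \<in> KD k"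
    and t: "\<forall>(a, b, f)\<in>KD k. (\<tau> a, \<tau> b, \<tau> ` f) \<in> KD k" and d: "(x, y, f) \<in> KD k"
  have "(\<tau> x, \<tau> y, \<tau> ` f) \<in> KD k" using t d by blast
  then have "(\<sigma> (\<tau> x), \<sigma> (\<tau> y), \<sigma> ` (\<tau> ` f)) \<in> KD k" using s by blast
  then show "((\<sigma> \<circ> \<tau>) x, (\<sigma> \<circ> \<tau>) y, (\<sigma> \<circ> \<tau>) ` f) \<in> KD k" by (simp add: image_comp)
qed

lemma classify:
  assumes k: "k \<ge> 1" and op: "orientation_preserving k \<gamma>" and inj: "inj \<gamma>"
  shows "(\<exists>c d. (int k + 1) dvd d \<and> \<gamma> = tr c d) \<or> (\<exists>a b. \<gamma> = rot a b)"
proof -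
  define K where "K = int k"
  have t: "tri_layer k K" unfolding K_def tri_layer_def by simp
  have nt: "\<not> tri_layer k (K - 1)" unfolding K_def tri_layer_def using k by simp
  have d1: "((0, K), (1, K), up 0 K) \<in> KD k" using upD1[OF t, of 0] by simp
  have d2: "((1, K), (0, K), sq 0 (K - 1)) \<in> KD k" using sqD3[OF nt, of 0] by simp
  have i1: "(\<gamma> (0, K), \<gamma> (1, K), \<gamma> ` up 0 K) \<in> KD k" using op d1 unfolding orientation_preserving_def by blast
  have i2: "(\<gamma> (1, K), \<gamma> (0, K), \<gamma> ` sq 0 (K - 1)) \<in> KD k" using op d2 unfolding orientation_preserving_def by blast
  have c1: "card (\<gamma> ` up 0 K) = 3" using card_image[OF inj_on_subset[OF inj subset_UNIV]] by simp
  have c2: "card (\<gamma> ` sq 0 (K - 1)) = 4" using card_image[OF inj_on_subset[OF inj subset_UNIV]] by simp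
  from classC[OF i1 c1 i2 c2] show ?thesis
  proof (elim disjE exE conjE)
    fix c y assume ty: "tri_layer k y" and a: "\<gamma> (0, K) = (c, y)" and b: "\<gamma> (1, K) = (c + 1, y)"
    have dv: "(int k + 1) dvd (y + 1)" using ty tri_dvd by blast
    have dv2: "(int k + 1) dvd (K - y)"
    proof -
      have "K - y = (int k + 1) - (y + 1)" unfolding K_def by simp
      moreover have "(int k + 1) dvd (int k + 1) - (y + 1)" using dv by (rule dvd_diff[OF dvd_refl])
      ultimately show ?thesis by simp
    qed
    let ?T = "tr (-c) (K - y)"
    have opd: "orientation_preserving k (?T \<circ> \<gamma>)" by (rule op_comp[OF tr_op[OF dv2] op])
    have "(?T \<circ> \<gamma>) (0, K) = (0, K)" "(?T \<circ> \<gamma>) (0 + 1, K) = (0 + 1, K)" using a b by simp_all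
    then have idd: "?T \<circ> \<gamma> = id" by (rule rigid[OF opd])
    have "\<gamma> = tr c (y - K)"
    proof
      fix p
      have "?T (\<gamma> p) = p" using idd by (metis comp_apply id_apply)
      then show "\<gamma> p = tr c (y - K) p" unfolding tr_def by (cases "\<gamma> p") auto
    qed
    moreover have "(int k + 1) dvd (y - K)" using dv2 by (metis dvd_minus_iff minus_diff_eq)
    ultimately show ?thesis by blast
  next
    fix c y assume ty: "tri_layer k y" and a: "\<gamma> (0, K) = (c + 1, y + 1)" and b: "\<gamma> (1, K) = (c, y + 1)"
    have dv: "(int k + 1) dvd (y + 1)" using ty tri_dvd by blast
    have dv2: "(int k + 1) dvd (y + 1 + K + 1)"
    proof -
      have e: "y + 1 + K + 1 = (y + 1) + (int k + 1)" unfolding K_def by simp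
      show ?thesis unfolding e by (rule dvd_add[OF dv dvd_refl])
    qed
    let ?R = "rot (c + 1) (y + 1 + K)"
    have opd: "orientation_preserving k (?R \<circ> \<gamma>)" by (rule op_comp[OF rot_op[OF dv2] op])
    have "(?R \<circ> \<gamma>) (0, K) = (0, K)" "(?R \<circ> \<gamma>) (0 + 1, K) = (0 + 1, K)" using a b by simp_all
    then have idd: "?R \<circ> \<gamma> = id" by (rule rigid[OF opd])
    have "\<gamma> = ?R"
    proof
      fix p
      have "?R (\<gamma> p) = p" using idd by (metis comp_apply id_apply)
      then show "\<gamma> p = ?R p" unfolding rot_def by (cases "\<gamma> p") auto
    qed
    then show ?thesis by blast
  qed
qed

lemma rot_fixes: "(\<exists>v. rot a b v = v) \<or> (\<exists>e\<in>KE k. rot a b ` e = e) \<or> (\<exists>f\<in>KF k. rot a b ` f = f)"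
proof -
  have "\<exists>z. b = 2 * z \<or> b = 2 * z + 1" by presburger
  then obtain z where bz: "b = 2 * z \<or> b = 2 * z + 1" by blast
  have "\<exists>i. a = 2 * i \<or> a = 2 * i + 1" by presburger
  then obtain i where ai: "a = 2 * i \<or> a = 2 * i + 1" by blast
  show ?thesis
  proof (cases "b = 2 * z")
    case True
    show ?thesis
    proof (cases "a = 2 * i")
      case True
      then have "rot a b (i, z) = (i, z)" using \<open>b = 2 * z\<close> by simp
      then show ?thesis by blast
    next
      case False
      then have a: "a = 2 * i + 1" using ai by simp
      have "{(i, z), (i + 1, z)} \<in> KE k" unfolding KE_iff by blast
      moreover have "rot a b ` {(i, z), (i + 1, z)} = {(i, z), (i + 1, z)}" unfolding a True by (simp add: insert_commute)
      ultimately show ?thesis by blast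
    qed
  next
    case False
    then have b: "b = 2 * z + 1" using bz by simp
    show ?thesis
    proof (cases "a = 2 * i")
      case True
      have "{(i, z), (i, z + 1)} \<in> KE k" unfolding KE_iff by blast
      moreover have "rot a b ` {(i, z), (i, z + 1)} = {(i, z), (i, z + 1)}" unfolding b True by (simp add: insert_commute)
      ultimately show ?thesis by blast
    next
      case False
      then have a: "a = 2 * i + 1" using ai by simp
      show ?thesis
      proof (cases "tri_layer k z")
        case True
        have "{(i + 1, z), (i, z + 1)} \<in> KE k" unfolding KE_iff using True by blast
        moreover have "rot a b ` {(i + 1, z), (i, z + 1)} = {(i + 1, z), (i, z + 1)}" unfolding a b by (simp add: insert_commute)
        ultimately show ?thesis by blast
      next
        case False
        have "sq i z \<in> KF k" unfolding KF_iff using False by blast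
        moreover have "rot a b ` sq i z = sq i z" unfolding rot_sq using a b by simp
        ultimately show ?thesis by blast
      qed
    qed
  qed
qed

lemma rot_not_id: "rot a b \<noteq> id"
proof
  assume "rot a b = id"
  then have "rot a b (0, 0) = (0, 0)" "rot a b (1, 0) = (1, 0)" by (metis id_apply)+
  then show False by simp
qed

lemma tg_aut: "torus_group k \<Gamma> \<Longrightarrow> \<forall>\<gamma>\<in>\<Gamma>. map_aut UNIV (KE k) (KF k) \<gamma>"
  unfolding torus_group_def by (rule conjunct1)
lemma tg_inv: "torus_group k \<Gamma> \<Longrightarrow> \<forall>\<alpha>\<in>\<Gamma>. inv \<alpha> \<in> \<Gamma>"
  unfolding torus_group_def by (drule conjunct2, drule conjunct2, drule conjunct2, erule conjunct1)
lemma tg_free: "torus_group k \<Gamma> \<Longrightarrow> \<forall>\<gamma>\<in>\<Gamma>. \<gamma> \<noteq> id \<longrightarrow>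
        (\<forall>v. \<gamma> v \<noteq> v) \<and> (\<forall>e\<in>KE k. \<gamma> ` e \<noteq> e) \<and> (\<forall>f\<in>KF k. \<gamma> ` f \<noteq> f)"
  unfolding torus_group_def by (drule conjunct2, drule conjunct2, drule conjunct2, drule conjunct2, erule conjunct1)
lemma tg_op: "torus_group k \<Gamma> \<Longrightarrow> \<forall>\<gamma>\<in>\<Gamma>. orientation_preserving k \<gamma>"
  unfolding torus_group_def by (drule conjunct2, drule conjunct2, drule conjunct2, drule conjunct2, drule conjunct2, erule conjunct1)

lemma gamma_tr:
  assumes k: "k \<ge> 1" and tg: "torus_group k \<Gamma>" and g: "\<gamma> \<in> \<Gamma>"
  shows "\<exists>c d. (int k + 1) dvd d \<and> \<gamma> = tr c d"
proof -
  have op: "orientation_preserving k \<gamma>" using tg_op[OF tg] g by blast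
  have "map_aut UNIV (KE k) (KF k) \<gamma>" using tg_aut[OF tg] g by blast
  then have inj: "inj \<gamma>" unfolding map_aut_def bij_betw_def by blast
  have free: "\<gamma> \<noteq> id \<Longrightarrow> (\<forall>v. \<gamma> v \<noteq> v) \<and> (\<forall>e\<in>KE k. \<gamma> ` e \<noteq> e) \<and> (\<forall>f\<in>KF k. \<gamma> ` f \<noteq> f)"
    using tg_free[OF tg] g by blast
  show ?thesis
  proof (rule ccontr)
    assume "\<not> ?thesis"
    then obtain a b where r: "\<gamma> = rot a b" using classify[OF k op inj] by blast
    have "\<gamma> \<noteq> id" unfolding r by (rule rot_not_id)
    then have fr: "(\<forall>v. \<gamma> v \<noteq> v) \<and> (\<forall>e\<in>KE k. \<gamma> ` e \<noteq> e) \<and> (\<forall>f\<in>KF k. \<gamma> ` f \<noteq> f)" by (rule free)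
    from rot_fixes[of a b k] show False unfolding r[symmetric] using fr by metis
  qed
qed

definition typeA :: "nat \<Rightarrow> int \<times> int \<Rightarrow> bool" where
  "typeA k p \<longleftrightarrow> tri_layer k (snd p) \<or> tri_layer k (snd p - 1)"

lemma typeA_tr: "(int k + 1) dvd d \<Longrightarrow> typeA k (tr c d p) = typeA k p"
proof -
  assume h: "(int k + 1) dvd d"
  have e: "snd p - 1 + d = snd p + d - 1" by simp
  have "tri_layer k (snd p + d - 1) = tri_layer k (snd p - 1)" using tri_tr[OF h, of "snd p - 1"] unfolding e .
  then show ?thesis unfolding typeA_def tr_def using tri_tr[OF h, of "snd p"] by simp
qed

lemma inv_tr: "inv (tr c d) = tr (-c) (-d)"
  by (rule inv_equality) (auto simp: tr_def)

lemma trans_good: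
  assumes k: "k \<in> {2, 3}" and t: "typeA k v = typeA k w"
  shows "\<exists>\<sigma>. good k \<sigma> \<and> \<sigma> v = w"
proof -
  obtain i y where v: "v = (i, y)" by (cases v)
  obtain i' y' where w: "w = (i', y')" by (cases w)
  show ?thesis
  proof (cases "(int k + 1) dvd (y' - y)")
    case True
    then have "good k (tr (i' - i) (y' - y))" unfolding good_def by blast
    moreover have "tr (i' - i) (y' - y) v = w" using v w by simp
    ultimately show ?thesis by blast
  next
    case False
    have "(int k + 1) dvd (y + y' + 1)"
    proof (cases "k = 2")
      case True
      then show ?thesis using t False unfolding v w typeA_def tri_dvd by simp presburger
    next
      case False
      then have "k = 3" using k by simp
      then show ?thesis using t \<open>\<not> (int k + 1) dvd (y' - y)\<close> unfolding v w typeA_def tri_dvd by simp presburger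
    qed
    then have "good k (rot (i + i') (y + y'))" unfolding good_def by blast
    moreover have "rot (i + i') (y + y') v = w" using v w by simp
    ultimately show ?thesis by blast
  qed
qed

locale setting =
  fixes k :: nat and \<Gamma> :: "(int \<times> int \<Rightarrow> int \<times> int) set"
    and \<eta> :: "int \<times> int \<Rightarrow> 'v" and VX :: "'v set" and EdX FcX :: "'v set set"
  assumes k: "k \<in> {2, 3}"
    and tg: "torus_group k \<Gamma>"
    and qm: "quotient_map k \<Gamma> \<eta> VX EdX FcX"
begin

lemma k1: "k \<ge> 1" using k by auto

lemmas qmc = qm[unfolded quotient_map_def]
lemma VX: "range \<eta> = VX" using conjunct1[OF qmc] .
lemma eqv: "\<eta> a = \<eta> b \<longleftrightarrow> (\<exists>\<gamma>\<in>\<Gamma>. \<gamma> a = b)"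
  using conjunct1[OF conjunct2[OF qmc]] by blast
lemma EdX: "EdX = (\<lambda>e. \<eta> ` e) ` KE k"
  using conjunct1[OF conjunct2[OF conjunct2[OF qmc]]] .
lemma FcX: "FcX = (\<lambda>f. \<eta> ` f) ` KF k"
  using conjunct1[OF conjunct2[OF conjunct2[OF conjunct2[OF qmc]]]] .
lemma injf: "f \<in> KF k \<Longrightarrow> inj_on \<eta> f"
  using conjunct1[OF conjunct2[OF conjunct2[OF conjunct2[OF conjunct2[OF qmc]]]]] by blast
lemma poly: "polyhedral_map VX EdX FcX"
  using conjunct2[OF conjunct2[OF conjunct2[OF conjunct2[OF conjunct2[OF qmc]]]]] .
lemma fsub: "f \<in> FcX \<Longrightarrow> f \<subseteq> VX"
  using poly unfolding polyhedral_map_def by blast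

lemma gtr: "\<gamma> \<in> \<Gamma> \<Longrightarrow> \<exists>c d. (int k + 1) dvd d \<and> \<gamma> = tr c d"
  using gamma_tr[OF k1 tg] by blast

lemma eta_tr: "\<eta> v = \<eta> w \<Longrightarrow> \<exists>c d. (int k + 1) dvd d \<and> tr c d \<in> \<Gamma> \<and> tr (-c) (-d) \<in> \<Gamma> \<and> tr c d v = w"
proof -
  assume "\<eta> v = \<eta> w"
  then obtain \<gamma> where g: "\<gamma> \<in> \<Gamma>" "\<gamma> v = w" using eqv by blast
  then obtain c d where cd: "(int k + 1) dvd d" "\<gamma> = tr c d" using gtr by blast
  have "inv \<gamma> \<in> \<Gamma>" using tg_inv[OF tg] g(1) by blast
  then have "tr (-c) (-d) \<in> \<Gamma>" using cd inv_tr by simp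
  then show ?thesis using cd g by blast
qed

lemma G2: assumes g: "good k \<sigma>" shows "\<eta> v = \<eta> w \<longleftrightarrow> \<eta> (\<sigma> v) = \<eta> (\<sigma> w)"
proof -
  from g consider (t) a b where "\<sigma> = tr a b" | (r) a b where "\<sigma> = rot a b" unfolding good_def by blast
  then show ?thesis
  proof cases
    case t
    show ?thesis
    proof
      assume "\<eta> v = \<eta> w"
      then obtain c d where cd: "tr c d \<in> \<Gamma>" "tr c d v = w" using eta_tr by blast
      have "tr c d (\<sigma> v) = \<sigma> w" using cd(2) t by (cases v) auto
      then show "\<eta> (\<sigma> v) = \<eta> (\<sigma> w)" using eqv cd(1) by blast
    next
      assume "\<eta> (\<sigma> v) = \<eta> (\<sigma> w)"
      then obtain c d where cd: "tr c d \<in> \<Gamma>" "tr c d (\<sigma> v) = \<sigma> w" using eta_tr by blast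
      have "tr c d v = w" using cd(2) t by (cases v, cases w) auto
      then show "\<eta> v = \<eta> w" using eqv cd(1) by blast
    qed
  next
    case r
    show ?thesis
    proof
      assume "\<eta> v = \<eta> w"
      then obtain c d where cd: "tr (-c) (-d) \<in> \<Gamma>" "tr c d v = w" using eta_tr by blast
      have "tr (-c) (-d) (\<sigma> v) = \<sigma> w" using cd(2) r by (cases v) auto
      then show "\<eta> (\<sigma> v) = \<eta> (\<sigma> w)" using eqv cd(1) by blast
    next
      assume "\<eta> (\<sigma> v) = \<eta> (\<sigma> w)"
      then obtain c d where cd: "tr (-c) (-d) \<in> \<Gamma>" "tr c d (\<sigma> v) = \<sigma> w" using eta_tr by blast
      have "tr (-c) (-d) v = w" using cd(2) r by (cases v, cases w) auto
      then show "\<eta> v = \<eta> w" using eqv cd(1) by blast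
    qed
  qed
qed

definition phi :: "(int \<times> int \<Rightarrow> int \<times> int) \<Rightarrow> 'v \<Rightarrow> 'v" where
  "phi \<sigma> x = \<eta> (\<sigma> (inv \<eta> x))"

lemma phi_eta: assumes g: "good k \<sigma>" shows "phi \<sigma> (\<eta> v) = \<eta> (\<sigma> v)"
proof -
  have "\<eta> (inv \<eta> (\<eta> v)) = \<eta> v" by (rule f_inv_into_f) simp
  then show ?thesis unfolding phi_def using G2[OF g] by blast
qed

lemma phi_img: "good k \<sigma> \<Longrightarrow> phi \<sigma> ` (\<eta> ` e) = \<eta> ` (\<sigma> ` e)"
  by (auto simp: phi_eta image_image)

lemma phi_aut: assumes g: "good k \<sigma>" shows "map_aut VX EdX FcX (phi \<sigma>)"
proof -
  have inj: "inj_on (phi \<sigma>) VX"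
  proof
    fix x y assume "x \<in> VX" "y \<in> VX" and e: "phi \<sigma> x = phi \<sigma> y"
    then obtain v w where "x = \<eta> v" "y = \<eta> w" using VX by blast
    then show "x = y" using e phi_eta[OF g] G2[OF g] by metis
  qed
  have img: "phi \<sigma> ` VX = VX"
  proof
    show "phi \<sigma> ` VX \<subseteq> VX" using VX phi_eta[OF g] by auto
    obtain \<sigma>' where s': "good k \<sigma>'" "\<forall>p. \<sigma> (\<sigma>' p) = p" using good_inv[OF g] by blast
    show "VX \<subseteq> phi \<sigma> ` VX"
    proof
      fix x assume "x \<in> VX"
      then obtain w where x: "x = \<eta> w" using VX by blast
      have "\<And>p. \<sigma> (\<sigma>' p) = p" using s'(2) by blast
      then have "phi \<sigma> (\<eta> (\<sigma>' w)) = x" unfolding x phi_eta[OF g] by simp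
      moreover have "\<eta> (\<sigma>' w) \<in> VX" using VX by blast
      ultimately show "x \<in> phi \<sigma> ` VX" by blast
    qed
  qed
  have ed: "(\<lambda>e. phi \<sigma> ` e) ` EdX = EdX"
  proof -
    have "(\<lambda>e. phi \<sigma> ` e) ` EdX = (\<lambda>e. \<eta> ` e) ` ((\<lambda>e. \<sigma> ` e) ` KE k)"
      unfolding EdX by (simp add: image_image phi_eta[OF g])
    also have "\<dots> = EdX" unfolding good_KE_eq[OF g] EdX ..
    finally show ?thesis .
  qed
  have fc: "(\<lambda>e. phi \<sigma> ` e) ` FcX = FcX"
  proof -
    have "(\<lambda>e. phi \<sigma> ` e) ` FcX = (\<lambda>e. \<eta> ` e) ` ((\<lambda>e. \<sigma> ` e) ` KF k)"
      unfolding FcX by (simp add: image_image phi_eta[OF g])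
    also have "\<dots> = FcX" unfolding good_KF_eq[OF g] FcX ..
    finally show ?thesis .
  qed
  show ?thesis unfolding map_aut_def bij_betw_def using inj img ed fc by blast
qed

definition tri_pt :: "'v \<Rightarrow> bool" where
  "tri_pt x \<longleftrightarrow> (\<exists>f\<in>FcX. x \<in> f \<and> card f = 3)"

lemma tri_pt_eta: "tri_pt (\<eta> v) \<longleftrightarrow> typeA k v"
proof
  assume "typeA k v"
  obtain i y where v: "v = (i, y)" by (cases v)
  show "tri_pt (\<eta> v)"
  proof (cases "tri_layer k y")
    case True
    have t: "up i y \<in> KF k" unfolding KF_iff using True by blast
    have "v \<in> up i y" unfolding v up_def by simp
    moreover have "\<eta> ` up i y \<in> FcX" unfolding FcX using t by blast
    moreover have "card (\<eta> ` up i y) = 3" using card_image[OF injf[OF t]] by simp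
    ultimately show ?thesis unfolding tri_pt_def by blast
  next
    case False
    then have tt: "tri_layer k (y - 1)" using \<open>typeA k v\<close> unfolding v typeA_def by simp
    have t: "dn i (y - 1) \<in> KF k" unfolding KF_iff using tt by blast
    have "v \<in> dn i (y - 1)" unfolding v dn_def by simp
    moreover have "\<eta> ` dn i (y - 1) \<in> FcX" unfolding FcX using t by blast
    moreover have "card (\<eta> ` dn i (y - 1)) = 3" using card_image[OF injf[OF t]] by simp
    ultimately show ?thesis unfolding tri_pt_def by blast
  qed
next
  assume "tri_pt (\<eta> v)"
  then obtain f where f: "f \<in> FcX" "\<eta> v \<in> f" "card f = 3" unfolding tri_pt_def by blast
  then obtain t where t: "t \<in> KF k" "f = \<eta> ` t" unfolding FcX by blast
  have ct: "card t = 3" using f(3) card_image[OF injf[OF t(1)]] t(2) by simp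
  obtain w where w: "w \<in> t" "\<eta> w = \<eta> v" using f(2) t(2) by (metis imageE)
  have tw: "typeA k w"
  proof -
    from t(1) consider (s) i y where "f = f" "t = sq i y" | (u) i y where "tri_layer k y" "t = up i y"
      | (d) i y where "tri_layer k y" "t = dn i y" unfolding KF_iff by blast
    then show ?thesis
    proof cases
      case s then show ?thesis using ct by simp
    next
      case u then show ?thesis using w(1) unfolding typeA_def up_def by auto
    next
      case d then show ?thesis using w(1) unfolding typeA_def dn_def by auto
    qed
  qed
  obtain c d where "(int k + 1) dvd d" "tr c d w = v" using eta_tr[OF w(2)] by blast
  then show "typeA k v" using typeA_tr tw by metis
qed

lemma aut_tri:
  assumes m: "map_aut VX EdX FcX \<phi>" and x: "x \<in> VX"
  shows "tri_pt (\<phi> x) = tri_pt x"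
proof -
  have bij: "bij_betw \<phi> VX VX" and fc: "(\<lambda>f. \<phi> ` f) ` FcX = FcX" using m unfolding map_aut_def by blast+
  have inj: "inj_on \<phi> VX" using bij unfolding bij_betw_def by blast
  show ?thesis
  proof
    assume "tri_pt (\<phi> x)"
    then obtain f where f: "f \<in> FcX" "\<phi> x \<in> f" "card f = 3" unfolding tri_pt_def by blast
    then obtain g where g: "g \<in> FcX" "f = \<phi> ` g" using fc by blast
    have gs: "g \<subseteq> VX" using fsub g(1) by blast
    obtain z where z: "z \<in> g" "\<phi> z = \<phi> x" using f(2) g(2) by (metis imageE)
    have "z = x" using inj z gs x unfolding inj_on_def by blast
    moreover have "card g = 3" using f(3) g(2) card_image[OF inj_on_subset[OF inj gs]] by simp
    ultimately show "tri_pt x" unfolding tri_pt_def using g(1) z(1) by blast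
  next
    assume "tri_pt x"
    then obtain f where f: "f \<in> FcX" "x \<in> f" "card f = 3" unfolding tri_pt_def by blast
    have fs: "f \<subseteq> VX" using fsub f(1) by blast
    have "\<phi> ` f \<in> FcX" using fc f(1) by blast
    moreover have "card (\<phi> ` f) = 3" using f(3) card_image[OF inj_on_subset[OF inj fs]] by simp
    moreover have "\<phi> x \<in> \<phi> ` f" using f(2) by blast
    ultimately show "tri_pt (\<phi> x)" unfolding tri_pt_def by blast
  qed
qed

lemma orbit_class:
  assumes x: "x \<in> VX"
  shows "aut_orbit_rel VX EdX FcX `` {x} = {y \<in> VX. tri_pt y = tri_pt x}"
proof
  show "aut_orbit_rel VX EdX FcX `` {x} \<subseteq> {y \<in> VX. tri_pt y = tri_pt x}"
    unfolding aut_orbit_rel_def using aut_tri by blast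
  show "{y \<in> VX. tri_pt y = tri_pt x} \<subseteq> aut_orbit_rel VX EdX FcX `` {x}"
  proof
    fix y assume y: "y \<in> {y \<in> VX. tri_pt y = tri_pt x}"
    obtain v where v: "x = \<eta> v" using x VX by blast
    obtain w where w: "y = \<eta> w" using y VX by blast
    have "typeA k v = typeA k w" using y tri_pt_eta v w by simp
    then obtain \<sigma> where s: "good k \<sigma>" "\<sigma> v = w" using trans_good[OF k] by blast
    have "map_aut VX EdX FcX (phi \<sigma>)" by (rule phi_aut[OF s(1)])
    moreover have "phi \<sigma> x = y" unfolding v w phi_eta[OF s(1)] s(2) ..
    ultimately show "y \<in> aut_orbit_rel VX EdX FcX `` {x}" unfolding aut_orbit_rel_def using x y by blast
  qed
qed

lemma main: "card (VX // aut_orbit_rel VX EdX FcX) = 2"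
proof -
  define P where "P = {y \<in> VX. tri_pt y = True}"
  define N where "N = {y \<in> VX. tri_pt y = False}"
  have q: "VX // aut_orbit_rel VX EdX FcX = (\<Union>x\<in>VX. {{y \<in> VX. tri_pt y = tri_pt x}})"
    unfolding quotient_def using orbit_class by simp
  have tA: "typeA k (0, int k)" unfolding typeA_def tri_layer_def by simp
  have tB: "\<not> typeA k (0, 1)" using k unfolding typeA_def tri_layer_def by auto
  have x0: "\<eta> (0, int k) \<in> VX" "tri_pt (\<eta> (0, int k))" using VX tA tri_pt_eta by auto
  have x1: "\<eta> (0, 1) \<in> VX" "\<not> tri_pt (\<eta> (0, 1))" using VX tB tri_pt_eta by auto
  have "VX // aut_orbit_rel VX EdX FcX = {P, N}"
  proof
    show "VX // aut_orbit_rel VX EdX FcX \<subseteq> {P, N}" unfolding q P_def N_def by auto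
    have "P \<in> VX // aut_orbit_rel VX EdX FcX" unfolding q P_def using x0 by blast
    moreover have "N \<in> VX // aut_orbit_rel VX EdX FcX" unfolding q N_def using x1 by blast
    ultimately show "{P, N} \<subseteq> VX // aut_orbit_rel VX EdX FcX" by blast
  qed
  moreover have "P \<noteq> N" using x0 unfolding P_def N_def by blast
  ultimately show ?thesis by simp
qed

end

theorem theorem1:
  fixes k :: nat and \<Gamma> :: "(int \<times> int \<Rightarrow> int \<times> int) set"
    and \<eta> :: "int \<times> int \<Rightarrow> 'v" and VX :: "'v set" and EdX FcX :: "'v set set"
  assumes "k \<in> {2, 3}"
    and "torus_group k \<Gamma>"
    and "quotient_map k \<Gamma> \<eta> VX EdX FcX"
  shows "card (VX // aut_orbit_rel VX EdX FcX) = 2"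
proof -
  interpret setting k \<Gamma> \<eta> VX EdX FcX using assms by unfold_locales
  show ?thesis by (rule main)
qed

end
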